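(* Let $n\ge 3$ and let $K_{n+1}=(V,E)$ be the complete graph on $V=\{0,\dots,n\}$. Then $\dim P^3_{[0,n]}(K_{n+1})=|E|-n-2$.
   Context: For an undirected graph $G=(V,E)$ with $V=\{0,\dots,n\}$, a $[0,n]$-$p$-path is a simple (undirected) path from $0$ to $n$ with exactly $p$ edges, and $P^p_{[0,n]}(G)\subseteq\mathbb{R}^E$ is the convex hull of the incidence vectors of all $[0,n]$-$p$-paths in $G$. *)

theory Defs
  imports "HOL-Analysis.Analysis" "HOL-Library.Poly_Mapping" "HOL-Analysis.Finite_Function_Topology"
begin

text \<open>Vectors in R^E are finitely supported real functions on vertex sets
  (finitely supported maps, type poly_mapping); incidence vectors are supported on E.\<close>

definition complete_graph_edges :: "nat set \<Rightarrow> nat set set" where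
  "complete_graph_edges V = {{u, v} | u v. u \<in> V \<and> v \<in> V \<and> u \<noteq> v}"

definition is_st_p_path :: "nat set \<Rightarrow> nat set set \<Rightarrow> nat \<Rightarrow> nat \<Rightarrow> nat \<Rightarrow> nat list \<Rightarrow> bool" where
  "is_st_p_path V E s t p vs \<longleftrightarrow>
     length vs = p + 1 \<and> distinct vs \<and> set vs \<subseteq> V \<and> hd vs = s \<and> last vs = t \<and>
     (\<forall>i < p. {vs ! i, vs ! Suc i} \<in> E)"

definition path_edges :: "nat list \<Rightarrow> nat set set" where
  "path_edges vs = {{vs ! i, vs ! Suc i} | i. Suc i < length vs}"

definition incidence_vector :: "nat set set \<Rightarrow> (nat set \<Rightarrow>\<^sub>0 real)" where
  "incidence_vector F = (\<Sum>e\<in>F. Poly_Mapping.single e 1)"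

definition path_polytope :: "nat set \<Rightarrow> nat set set \<Rightarrow> nat \<Rightarrow> nat \<Rightarrow> nat \<Rightarrow> (nat set \<Rightarrow>\<^sub>0 real) set" where
  "path_polytope V E s t p =
     convex hull {incidence_vector (path_edges vs) | vs. is_st_p_path V E s t p vs}"

text \<open>Affine dimension, literally the library's definition of aff_dim
  (stated there for euclidean spaces), transferred to arbitrary real vector
  spaces, with the independent set B required to be finite.\<close>
definition gen_aff_dim :: "'a::real_vector set \<Rightarrow> int" where
  "gen_aff_dim S = (SOME d. \<exists>B. finite B \<and> affine hull B = affine hull S \<and>
       \<not> affine_dependent B \<and> of_nat (card B) = d + 1)"

end

theory Submission
  imports Defs
begin


lemma lookup_scaleR_pm:
  fixes x :: "'a \<Rightarrow>\<^sub>0 real"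
  shows "Poly_Mapping.lookup (r *\<^sub>R x) i = r * Poly_Mapping.lookup x i"
proof -
  have "finite {i. r *\<^sub>R Poly_Mapping.lookup x i \<noteq> 0}"
  proof (rule finite_subset)
    show "{i. r *\<^sub>R Poly_Mapping.lookup x i \<noteq> 0} \<subseteq> {k. Poly_Mapping.lookup x k \<noteq> 0}" by auto
  qed simp
  then show ?thesis by (simp add: scaleR_poly_mapping_def)
qed

lemma aff_indep_card_le:
  fixes B C :: "'a::real_vector set"
  assumes fB: "finite B" and ind: "\<not> affine_dependent B" and fC: "finite C"
    and sub: "B \<subseteq> affine hull C"
  shows "card B \<le> card C"
proof -
  define L where "L = (\<lambda>x::'a. (x, 1::real))"
  have injL: "inj L" by (auto simp: L_def inj_def)
  have indep: "\<not> dependent (L ` B)"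
  proof
    assume "dependent (L ` B)"
    then obtain u where u1: "\<exists>v\<in>L`B. u v \<noteq> 0" and u2: "(\<Sum>v\<in>L`B. u v *\<^sub>R v) = 0"
      using dependent_finite[of "L`B"] fB by auto
    have "(\<Sum>v\<in>L`B. u v *\<^sub>R v) = (\<Sum>b\<in>B. u (L b) *\<^sub>R L b)"
      by (simp add: sum.reindex inj_on_subset[OF injL])
    hence z: "(\<Sum>b\<in>B. u (L b) *\<^sub>R L b) = 0" using u2 by simp
    have s1: "(\<Sum>b\<in>B. u (L b) *\<^sub>R b) = 0"
      using arg_cong[OF z, of fst] by (simp add: fst_sum L_def)
    have s2: "(\<Sum>b\<in>B. u (L b)) = 0"
      using arg_cong[OF z, of snd] by (simp add: snd_sum L_def)
    have nz: "\<exists>v\<in>B. u (L v) \<noteq> 0" using u1 by auto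
    have "\<exists>U. sum U B = 0 \<and> (\<exists>v\<in>B. U v \<noteq> 0) \<and> (\<Sum>v\<in>B. U v *\<^sub>R v) = 0"
      by (rule exI[of _ "\<lambda>b. u (L b)"]) (use s1 s2 nz in simp)
    hence "affine_dependent B"
      using affine_dependent_explicit_finite[OF fB] by simp
    thus False using ind by simp
  qed
  have "L ` B \<subseteq> span (L ` C)"
  proof
    fix y assume "y \<in> L ` B"
    then obtain b where b: "b \<in> B" "y = L b" by auto
    then have "b \<in> affine hull C" using sub by auto
    then obtain u where u: "sum u C = 1" "(\<Sum>c\<in>C. u c *\<^sub>R c) = b"
      using affine_hull_finite[OF fC] by auto
    have "L b = (\<Sum>c\<in>C. u c *\<^sub>R L c)"
      using u by (simp add: L_def prod_eq_iff fst_sum snd_sum)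
    also have "\<dots> \<in> span (L ` C)"
      by (intro span_sum span_scale span_base) auto
    finally show "y \<in> span (L ` C)" using b by simp
  qed
  then have "card (L ` B) \<le> card (L ` C)"
    using independent_span_bound[OF finite_imageI[OF fC] indep] by auto
  moreover have "card (L ` B) = card B" by (rule card_image[OF inj_on_subset[OF injL]]) auto
  moreover have "card (L ` C) \<le> card C" by (rule card_image_le[OF fC])
  ultimately show ?thesis by simp
qed

lemma gen_aff_dim_eq:
  fixes B S :: "'a::real_vector set"
  assumes fB: "finite B" and ind: "\<not> affine_dependent B" and hB: "affine hull B = affine hull S"
  shows "gen_aff_dim S = int (card B) - 1"
proof -
  have ex: "\<exists>(d::int) B. finite B \<and> affine hull B = affine hull S \<and> \<not> affine_dependent B \<and> of_nat (card B) = d + 1"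
    by (rule exI[of _ "int (card B) - 1"], rule exI[of _ B]) (simp add: assms)
  obtain B' where B': "finite B'" "affine hull B' = affine hull S" "\<not> affine_dependent B'"
    "of_nat (card B') = gen_aff_dim S + 1"
    using someI_ex[OF ex] unfolding gen_aff_dim_def by blast
  have "card B \<le> card B'"
    using aff_indep_card_le[OF fB ind B'(1)] hB B'(2) hull_subset[of B affine] by auto
  moreover have "card B' \<le> card B"
    using aff_indep_card_le[OF B'(1) B'(3) fB] hB B'(2) hull_subset[of B' affine] by auto
  ultimately show ?thesis using B'(4) by simp
qed

lemma isolate_sum:
  assumes "finite J" "p0 \<in> J" "\<And>p. p \<in> J \<Longrightarrow> p \<noteq> p0 \<Longrightarrow> f p = 0"
  shows "sum f J = f p0"
proof -
  have "sum f J = f p0 + sum f (J - {p0})" by (rule sum.remove[OF assms(1,2)])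
  moreover have "sum f (J - {p0}) = 0" by (rule sum.neutral) (use assms in auto)
  ultimately show ?thesis by simp
qed


definition PV :: "nat \<Rightarrow> nat \<Rightarrow> nat \<Rightarrow> (nat set \<Rightarrow>\<^sub>0 real)" where
  "PV n a b = Poly_Mapping.single {0,a} 1 + Poly_Mapping.single {a,b} 1 + Poly_Mapping.single {b,n} 1"

lemma lookup_PV:
  "Poly_Mapping.lookup (PV n a b) e = (if e = {0,a} then 1 else 0) + (if e = {a,b} then 1 else 0) + (if e = {b,n} then 1 else 0)"
  unfolding PV_def lookup_add lookup_single by (simp add: when_def eq_commute)

lemma path_edges4: "path_edges [x0,x1,x2,x3] = {{x0,x1},{x1,x2},{x2,x3}}"
proof -
  have e: "path_edges [x0,x1,x2,x3] = (\<lambda>i. {[x0,x1,x2,x3] ! i, [x0,x1,x2,x3] ! Suc i}) ` {i. Suc i < 4}"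
    unfolding path_edges_def by auto
  have "{i. Suc i < (4::nat)} = {0,1,2}" by auto
  then show ?thesis unfolding e by (simp add: numeral_eq_Suc)
qed

lemma inc_PV:
  assumes "3 \<le> n" "a \<in> {1..n-1}" "b \<in> {1..n-1}" "a \<noteq> b"
  shows "incidence_vector (path_edges [0,a,b,n]) = PV n a b"
proof -
  have d1: "{0,a} \<noteq> {a,b}" "{0,a} \<noteq> {b,n}" "{a,b} \<noteq> {b,n}"
    using assms by (auto simp: doubleton_eq_iff)
  show ?thesis unfolding path_edges4 incidence_vector_def PV_def
    using d1 by (simp add: add.assoc)
qed

lemma cge_mem: "u \<in> V \<Longrightarrow> v \<in> V \<Longrightarrow> u \<noteq> v \<Longrightarrow> {u,v} \<in> complete_graph_edges V"
  unfolding complete_graph_edges_def by blast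

lemma card_edges:
  "card (complete_graph_edges {0..n}) = (n+1) choose 2"
proof -
  have "complete_graph_edges {0..n} = {A. A \<subseteq> {0..n} \<and> card A = 2}"
  proof (intro equalityI subsetI)
    fix A assume "A \<in> complete_graph_edges {0..n}"
    then obtain u v where "A = {u,v}" "u \<in> {0..n}" "v \<in> {0..n}" "u \<noteq> v"
      unfolding complete_graph_edges_def by blast
    then show "A \<in> {A. A \<subseteq> {0..n} \<and> card A = 2}" by simp
  next
    fix A assume "A \<in> {A. A \<subseteq> {0..n} \<and> card A = 2}"
    then obtain u v where "A = {u,v}" "u \<noteq> v" "A \<subseteq> {0..n}" by (auto simp: card_2_iff)
    then show "A \<in> complete_graph_edges {0..n}" using cge_mem[of u "{0..n}" v] by simp
  qed
  then show ?thesis using n_subsets[of "{0..n}" 2] by simp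
qed


lemma list4: assumes "length vs = 4" shows "vs = [vs!0, vs!1, vs!2, vs!3]"
proof (rule nth_equalityI)
  show "length vs = length [vs!0, vs!1, vs!2, vs!3]" using assms by simp
  fix i assume "i < length vs"
  then have "i = 0 \<or> i = 1 \<or> i = 2 \<or> i = 3" using assms by linarith
  then show "vs ! i = [vs!0, vs!1, vs!2, vs!3] ! i" by (elim disjE) simp_all
qed

lemma paths_eq:
  assumes n3: "3 \<le> n"
  shows "{incidence_vector (path_edges vs) | vs. is_st_p_path {0..n} (complete_graph_edges {0..n}) 0 n 3 vs}
       = {PV n a b | a b. a \<in> {1..n-1} \<and> b \<in> {1..n-1} \<and> a \<noteq> b}"
proof (intro equalityI subsetI)
  fix x assume "x \<in> {incidence_vector (path_edges vs) | vs. is_st_p_path {0..n} (complete_graph_edges {0..n}) 0 n 3 vs}"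
  then obtain vs where x: "x = incidence_vector (path_edges vs)"
    and p: "is_st_p_path {0..n} (complete_graph_edges {0..n}) 0 n 3 vs" by blast
  have len: "length vs = 4" using p by (simp add: is_st_p_path_def)
  define x1 where "x1 = vs ! 1"
  define x2 where "x2 = vs ! 2"
  have vs: "vs = [0,x1,x2,n]"
  proof -
    have ne: "vs \<noteq> []" using len by auto
    have "hd vs = 0" "last vs = n" using p by (simp_all add: is_st_p_path_def)
    then have "vs ! 0 = 0" "vs ! 3 = n" using ne len by (simp_all add: hd_conv_nth last_conv_nth)
    then show ?thesis using list4[OF len] unfolding x1_def x2_def by simp
  qed
  have d: "distinct [0,x1,x2,n]" and s: "set [0,x1,x2,n] \<subseteq> {0..n}"
    using p vs by (simp_all add: is_st_p_path_def)
  have ab: "x1 \<in> {1..n-1}" "x2 \<in> {1..n-1}" "x1 \<noteq> x2"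
    using d s by auto
  have "x = PV n x1 x2" using inc_PV[OF n3 ab] x vs by simp
  then show "x \<in> {PV n a b | a b. a \<in> {1..n-1} \<and> b \<in> {1..n-1} \<and> a \<noteq> b}" using ab by blast
next
  fix x assume "x \<in> {PV n a b | a b. a \<in> {1..n-1} \<and> b \<in> {1..n-1} \<and> a \<noteq> b}"
  then obtain a b where x: "x = PV n a b" and ab: "a \<in> {1..n-1}" "b \<in> {1..n-1}" "a \<noteq> b" by blast
  have e0: "{0,a} \<in> complete_graph_edges {0..n}" by (rule cge_mem) (use ab in auto)
  have e1: "{a,b} \<in> complete_graph_edges {0..n}" by (rule cge_mem) (use ab in auto)
  have e2: "{b,n} \<in> complete_graph_edges {0..n}" by (rule cge_mem) (use ab in auto)
  have e: "\<forall>i<3. {[0,a,b,n] ! i, [0,a,b,n] ! Suc i} \<in> complete_graph_edges {0..n}"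
  proof (intro allI impI)
    fix i :: nat assume "i < 3"
    then have "i = 0 \<or> i = 1 \<or> i = 2" by linarith
    then show "{[0, a, b, n] ! i, [0, a, b, n] ! Suc i} \<in> complete_graph_edges {0..n}"
    proof (elim disjE)
      assume "i = 0" then show ?thesis using e0 by simp
    next
      assume "i = 1" then show ?thesis using e1 by simp
    next
      assume "i = 2" then show ?thesis using e2 by (simp add: numeral_2_eq_2)
    qed
  qed
  have P: "is_st_p_path {0..n} (complete_graph_edges {0..n}) 0 n 3 [0,a,b,n]"
    unfolding is_st_p_path_def
  proof (intro conjI)
    show "distinct [0,a,b,n]" using ab n3 by auto
    show "set [0,a,b,n] \<subseteq> {0..n}" using ab by auto
  qed (use e in simp_all)
  have X: "x = incidence_vector (path_edges [0,a,b,n])" using inc_PV[OF n3 ab] x by simp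
  show "x \<in> {incidence_vector (path_edges vs) | vs. is_st_p_path {0..n} (complete_graph_edges {0..n}) 0 n 3 vs}"
    by (simp only: mem_Collect_eq) (rule exI[of _ "[0,a,b,n]"], rule conjI[OF X P])
qed


lemma lookup_PV_0:
  assumes "1 \<le> a" "1 \<le> b" "n \<ge> 3"
  shows "Poly_Mapping.lookup (PV n a b) {0,x} = (if x = a then 1 else 0)"
  using assms unfolding lookup_PV by (auto simp: doubleton_eq_iff)

lemma lookup_PV_n:
  assumes "a \<le> n - 1" "b \<le> n - 1" "n \<ge> 3"
  shows "Poly_Mapping.lookup (PV n a b) {x,n} = (if x = b then 1 else 0)"
  using assms unfolding lookup_PV by (auto simp: doubleton_eq_iff)

lemma lookup_PV_in:
  assumes "1 \<le> x" "1 \<le> y" "x \<le> n - 1" "y \<le> n - 1" "n \<ge> 3"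
  shows "Poly_Mapping.lookup (PV n a b) {x,y} = (if {x,y} = {a,b} then 1 else 0)"
  using assms unfolding lookup_PV by (auto simp: doubleton_eq_iff)

lemma PV_identity:
  "PV n a b = PV n b a + 1 *\<^sub>R (PV n a 1 - PV n 1 a) + 1 *\<^sub>R (PV n 1 b - PV n b 1)"
  by (simp add: PV_def insert_commute algebra_simps)

lemma choose2_SS: "Suc (Suc k) choose 2 = (k choose 2) + k + (k + 1)"
  by (simp add: numeral_2_eq_2)

theorem mainTheorem15:
  fixes n :: nat
  assumes "n \<ge> 3"
  shows "gen_aff_dim (path_polytope {0..n} (complete_graph_edges {0..n}) 0 n 3)
           = int (card (complete_graph_edges {0..n})) - int n - 2"
proof -
  have n3: "3 \<le> n" using assms by simp
  define S0 where "S0 = {PV n a b | a b. a \<in> {1..n-1} \<and> b \<in> {1..n-1} \<and> a \<noteq> b}"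
  have poly: "path_polytope {0..n} (complete_graph_edges {0..n}) 0 n 3 = convex hull S0"
    unfolding path_polytope_def S0_def using paths_eq[OF n3] by simp
  define J1 where "J1 = {(i,j). 1 \<le> i \<and> i < j \<and> j \<le> n-1}"
  define J2 where "J2 = (\<lambda>j. (j,1::nat)) ` {2..n-1}"
  define J where "J = J1 \<union> J2"
  define PP where "PP = (\<lambda>p. PV n (fst p) (snd p))"
  define B0 where "B0 = PP ` J"
  have Jmem: "\<And>a b. (a,b) \<in> J \<Longrightarrow> 1 \<le> a \<and> a \<le> n-1 \<and> 1 \<le> b \<and> b \<le> n-1 \<and> a \<noteq> b"
    by (auto simp: J_def J1_def J2_def)
  have J1fin: "finite J1"
    by (rule finite_subset[of _ "{0..n} \<times> {0..n}"]) (auto simp: J1_def)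
  have J2fin: "finite J2" unfolding J2_def by simp
  have finJ: "finite J" using J1fin J2fin by (simp add: J_def)
  have injPP: "inj_on PP J"
  proof (rule inj_onI)
    fix p q assume p: "p \<in> J" and q: "q \<in> J" and eq: "PP p = PP q"
    obtain a b where pab: "p = (a,b)" by fastforce
    obtain c d where qcd: "q = (c,d)" by fastforce
    have ra: "1 \<le> a \<and> a \<le> n-1 \<and> 1 \<le> b \<and> b \<le> n-1 \<and> a \<noteq> b" using Jmem p pab by simp
    have rc: "1 \<le> c \<and> c \<le> n-1 \<and> 1 \<le> d \<and> d \<le> n-1 \<and> c \<noteq> d" using Jmem q qcd by simp
    have eq2: "PV n a b = PV n c d" using eq pab qcd by (simp add: PP_def)
    have "Poly_Mapping.lookup (PV n a b) {0,a} = Poly_Mapping.lookup (PV n c d) {0,a}" using eq2 by simp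
    then have "a = c" using lookup_PV_0[of a b n a] lookup_PV_0[of c d n a] ra rc n3
      by (auto split: if_splits)
    have "Poly_Mapping.lookup (PV n a b) {b,n} = Poly_Mapping.lookup (PV n c d) {b,n}" using eq2 by simp
    then have "b = d" using lookup_PV_n[of a n b b] lookup_PV_n[of c n d b] ra rc n3
      by (auto split: if_splits)
    show "p = q" using pab qcd \<open>a = c\<close> \<open>b = d\<close> by simp
  qed
  have finB0: "finite B0" unfolding B0_def using finJ by simp
  have indep: "\<not> dependent B0"
  proof
    assume "dependent B0"
    then obtain u where u1: "\<exists>v\<in>B0. u v \<noteq> 0" and u2: "(\<Sum>v\<in>B0. u v *\<^sub>R v) = 0"
      using dependent_finite[OF finB0] by auto
    define c where "c = (\<lambda>p. u (PP p))"
    have "(\<Sum>v\<in>B0. u v *\<^sub>R v) = (\<Sum>p\<in>J. c p *\<^sub>R PP p)"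
      unfolding B0_def c_def by (simp add: sum.reindex[OF injPP])
    then have z: "(\<Sum>p\<in>J. c p *\<^sub>R PP p) = 0" using u2 by simp
    have lin: "(\<Sum>p\<in>J. c p * Poly_Mapping.lookup (PP p) e) = 0" for e
    proof -
      have "Poly_Mapping.lookup (\<Sum>p\<in>J. c p *\<^sub>R PP p) e = 0" using z by simp
      then show ?thesis by (simp add: lookup_sum lookup_scaleR_pm)
    qed
    have step1: "c (i,j) = 0" if ij: "2 \<le> i" "i < j" "j \<le> n-1" for i j
    proof -
      have ijJ: "(i,j) \<in> J" using ij by (auto simp: J_def J1_def)
      have "(\<Sum>p\<in>J. c p * Poly_Mapping.lookup (PP p) {i,j}) = c (i,j) * Poly_Mapping.lookup (PP (i,j)) {i,j}"
      proof (rule isolate_sum[OF finJ ijJ])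
        fix p assume pJ: "p \<in> J" and pne: "p \<noteq> (i,j)"
        obtain a b where pab: "p = (a,b)" by fastforce
        have ra: "1 \<le> a \<and> a \<le> n-1 \<and> 1 \<le> b \<and> b \<le> n-1 \<and> a \<noteq> b" using Jmem pJ pab by simp
        have "{i,j} \<noteq> {a,b}"
        proof
          assume h: "{i,j} = {a,b}"
          show False
          proof (cases "p \<in> J1")
            case True then have "a < b" using pab by (simp add: J1_def)
            then show False using h pne pab ij by (auto simp: doubleton_eq_iff)
          next
            case False then have "p \<in> J2" using pJ by (simp add: J_def)
            then have "b = 1" using pab by (auto simp: J2_def)
            then show False using h ij by (auto simp: doubleton_eq_iff)
          qed
        qed
        then show "c p * Poly_Mapping.lookup (PP p) {i,j} = 0"
          using lookup_PV_in[of i j n a b] ij ra n3 pab by (simp add: PP_def)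
      qed
      moreover have "Poly_Mapping.lookup (PP (i,j)) {i,j} = 1"
        using lookup_PV_in[of i j n i j] ij n3 by (simp add: PP_def)
      ultimately show ?thesis using lin[of "{i,j}"] by simp
    qed
    have step2: "c (j,1) = 0" if ij: "2 \<le> j" "j \<le> n-1" for j
    proof -
      have jJ: "(j,1) \<in> J" using ij by (auto simp: J_def J2_def)
      have "(\<Sum>p\<in>J. c p * Poly_Mapping.lookup (PP p) {0,j}) = c (j,1) * Poly_Mapping.lookup (PP (j,1)) {0,j}"
      proof (rule isolate_sum[OF finJ jJ])
        fix p assume pJ: "p \<in> J" and pne: "p \<noteq> (j,1)"
        obtain a b where pab: "p = (a,b)" by fastforce
        have ra: "1 \<le> a \<and> a \<le> n-1 \<and> 1 \<le> b \<and> b \<le> n-1 \<and> a \<noteq> b" using Jmem pJ pab by simp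
        show "c p * Poly_Mapping.lookup (PP p) {0,j} = 0"
        proof (cases "a = j")
          case False
          then show ?thesis using lookup_PV_0[of a b n j] ra n3 pab by (simp add: PP_def)
        next
          case True
          then have "b \<noteq> 1" using pne pab by simp
          then have "p \<in> J1" using pJ pab by (auto simp: J_def J2_def)
          then have "j < b" using pab True by (simp add: J1_def)
          then have "c p = 0" using step1[of j b] ij ra pab True by simp
          then show ?thesis by simp
        qed
      qed
      moreover have "Poly_Mapping.lookup (PP (j,1)) {0,j} = 1"
        using lookup_PV_0[of j 1 n j] ij n3 by (simp add: PP_def)
      ultimately show ?thesis using lin[of "{0,j}"] by simp
    qed
    have step3: "c (1,j) = 0" if ij: "2 \<le> j" "j \<le> n-1" for j
    proof -
      have jJ: "(1,j) \<in> J" using ij by (auto simp: J_def J1_def)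
      have "(\<Sum>p\<in>J. c p * Poly_Mapping.lookup (PP p) {1,j}) = c (1,j) * Poly_Mapping.lookup (PP (1,j)) {1,j}"
      proof (rule isolate_sum[OF finJ jJ])
        fix p assume pJ: "p \<in> J" and pne: "p \<noteq> (1,j)"
        obtain a b where pab: "p = (a,b)" by fastforce
        have ra: "1 \<le> a \<and> a \<le> n-1 \<and> 1 \<le> b \<and> b \<le> n-1 \<and> a \<noteq> b" using Jmem pJ pab by simp
        show "c p * Poly_Mapping.lookup (PP p) {1,j} = 0"
        proof (cases "{1,j} = {a,b}")
          case False
          then show ?thesis using lookup_PV_in[of 1 j n a b] ij ra n3 pab by (simp add: PP_def)
        next
          case True
          then have "p = (j,1)" using pne pab by (auto simp: doubleton_eq_iff)
          then show ?thesis using step2[OF ij] by simp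
        qed
      qed
      moreover have "Poly_Mapping.lookup (PP (1,j)) {1,j} = 1"
        using lookup_PV_in[of 1 j n 1 j] ij n3 by (simp add: PP_def)
      ultimately show ?thesis using lin[of "{1,j}"] by simp
    qed
    have "c p = 0" if pJ: "p \<in> J" for p
    proof -
      obtain a b where pab: "p = (a,b)" by fastforce
      show ?thesis
      proof (cases "p \<in> J1")
        case True
        then have h: "1 \<le> a" "a < b" "b \<le> n-1" using pab by (auto simp: J1_def)
        show ?thesis
        proof (cases "a = 1")
          case True then show ?thesis using step3[of b] h pab by simp
        next
          case False then show ?thesis using step1[of a b] h pab by simp
        qed
      next
        case False
        then have "p \<in> J2" using pJ by (simp add: J_def)
        then show ?thesis using step2 by (auto simp: J2_def)
      qed
    qed
    then show False using u1 by (auto simp: B0_def c_def)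
  qed
  have aind: "\<not> affine_dependent B0" using indep affine_dependent_imp_dependent by blast
  have B0S0: "B0 \<subseteq> S0"
  proof
    fix v assume "v \<in> B0"
    then obtain a b where "(a,b) \<in> J" "v = PV n a b" by (auto simp: B0_def PP_def)
    then show "v \<in> S0" using Jmem[of a b] by (auto simp: S0_def)
  qed
  have inB: "PV n a b \<in> B0" if "(a,b) \<in> J" for a b
    using that unfolding B0_def PP_def by force
  have S0B0: "S0 \<subseteq> affine hull B0"
  proof
    fix v assume "v \<in> S0"
    then obtain a b where v: "v = PV n a b" and ab: "a \<in> {1..n-1}" "b \<in> {1..n-1}" "a \<noteq> b"
      by (auto simp: S0_def)
    have aff: "affine (affine hull B0)" by simp
    show "v \<in> affine hull B0"
    proof (cases "a < b")
      case True
      then have "(a,b) \<in> J" using ab by (auto simp: J_def J1_def)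
      then show ?thesis using v inB hull_inc by metis
    next
      case False
      then have ba: "b < a" using ab by simp
      show ?thesis
      proof (cases "b = 1")
        case True
        then have "(a,b) \<in> J" using ab ba by (auto simp: J_def J2_def)
        then show ?thesis using v inB hull_inc by metis
      next
        case False
        have m1: "PV n b a \<in> affine hull B0" using inB[of b a] ab ba False
          by (intro hull_inc) (auto simp: J_def J1_def)
        have m2: "PV n a 1 \<in> affine hull B0" using inB[of a 1] ab ba
          by (intro hull_inc) (auto simp: J_def J2_def)
        have m3: "PV n 1 a \<in> affine hull B0" using inB[of 1 a] ab ba
          by (intro hull_inc) (auto simp: J_def J1_def)
        have m4: "PV n 1 b \<in> affine hull B0" using inB[of 1 b] ab ba False
          by (intro hull_inc) (auto simp: J_def J1_def)
        have m5: "PV n b 1 \<in> affine hull B0" using inB[of b 1] ab ba False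
          by (intro hull_inc) (auto simp: J_def J2_def)
        have "PV n b a + 1 *\<^sub>R (PV n a 1 - PV n 1 a) \<in> affine hull B0"
          by (rule mem_affine_3_minus[OF aff m1 m2 m3])
        then have "PV n b a + 1 *\<^sub>R (PV n a 1 - PV n 1 a) + 1 *\<^sub>R (PV n 1 b - PV n b 1) \<in> affine hull B0"
          by (rule mem_affine_3_minus[OF aff _ m4 m5])
        then show ?thesis using v PV_identity[of n a b] by simp
      qed
    qed
  qed
  have hulls: "affine hull B0 = affine hull (convex hull S0)"
  proof -
    have "affine hull S0 \<subseteq> affine hull B0"
      using S0B0 by (intro hull_minimal) auto
    moreover have "affine hull B0 \<subseteq> affine hull S0" using B0S0 by (rule hull_mono)
    ultimately show ?thesis by (simp add: affine_hull_convex_hull)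
  qed
  have dim: "gen_aff_dim (convex hull S0) = int (card B0) - 1"
    by (rule gen_aff_dim_eq[OF finB0 aind hulls])
  have cB0: "card B0 = card J" unfolding B0_def by (rule card_image[OF injPP])
  have disj: "J1 \<inter> J2 = {}" by (auto simp: J1_def J2_def)
  have cJ: "card J = card J1 + card J2" unfolding J_def by (rule card_Un_disjoint[OF J1fin J2fin disj])
  have cJ2: "card J2 = n - 2" unfolding J2_def by (subst card_image) (auto simp: inj_on_def)
  have cJ1: "card J1 = (n-1) choose 2"
  proof -
    have "bij_betw (\<lambda>(i,j). {i,j}) J1 {A. A \<subseteq> {1..n-1} \<and> card A = 2}"
    proof (rule bij_betw_imageI)
      show "inj_on (\<lambda>(i,j). {i,j}) J1"
      proof (rule inj_onI)
        fix p q assume "p \<in> J1" "q \<in> J1" "(\<lambda>(i,j). {i,j}) p = (\<lambda>(i,j). {i::nat,j}) q"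
        then show "p = q" by (auto simp: J1_def doubleton_eq_iff)
      qed
      show "(\<lambda>(i,j). {i,j}) ` J1 = {A. A \<subseteq> {1..n-1} \<and> card A = 2}"
      proof (intro equalityI subsetI)
        fix A assume "A \<in> (\<lambda>(i,j). {i,j}) ` J1"
        then show "A \<in> {A. A \<subseteq> {1..n-1} \<and> card A = 2}" by (auto simp: J1_def)
      next
        fix A assume "A \<in> {A. A \<subseteq> {1..n-1} \<and> card A = 2}"
        then obtain x y where A: "A = {x,y}" "x \<noteq> y" "A \<subseteq> {1..n-1}" by (auto simp: card_2_iff)
        show "A \<in> (\<lambda>(i,j). {i,j}) ` J1"
        proof (cases "x < y")
          case True
          then have "(x,y) \<in> J1" using A by (auto simp: J1_def)
          then show ?thesis using A by force
        next
          case False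
          then have "(y,x) \<in> J1" using A by (auto simp: J1_def)
          moreover have "A = {y,x}" using A by auto
          ultimately show ?thesis by force
        qed
      qed
    qed
    then have "card J1 = card {A. A \<subseteq> {1..n-1} \<and> card A = 2}" by (rule bij_betw_same_card)
    also have "\<dots> = (n-1) choose 2" using n_subsets[of "{1..n-1}" 2] by simp
    finally show ?thesis .
  qed
  define k where "k = n - 3"
  have k: "n = Suc (Suc (Suc k))" using n3 unfolding k_def by simp
  have cE: "card (complete_graph_edges {0..n}) = ((n-1) choose 2) + (n-1) + n"
    using card_edges[of n] choose2_SS[of "n-1"] k by simp
  show ?thesis
    unfolding poly dim cB0 cJ cJ1 cJ2 cE using k by simp
qed


end
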